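(* Let $q\ge 4$ be a prime power. Let $\ell$ and $m$ be distinct lines of $PG(2,q)$, let $P=\ell\cap m$, let $Q$ be a point of $\ell$ different from $P$, and let $R,S,T$ be three distinct points of $m$ different from $P$. Then $A=(\ell\setminus\{P,Q\})\cup\{R,S,T\}$ is a minimal $(1,2)$-saturating set of size $q+2$ in $PG(2,q)$.
   Context: $PG(2,q)$ is the projective plane over $\mathbb{F}_q$. For a point set $A$, a secant of $A$ is a line $\ell$ with $|\ell\cap A|\ge2$, counted with multiplicity $\binom{|\ell\cap A|}{2}$. A set $A$ of points of $PG(2,q)$ is $(1,\mu)$-saturating if (M1) $A$ spans $PG(2,q)$, (M2) $A\neq PG(2,q)$, and (M3) every point not in $A$ lies on secants of $A$ whose multiplicities sum to at least $\mu$. A $(1,\mu)$-saturating set of size $n$ is minimal if it does not contain a $(1,\mu)$-saturating set of size $n-1$. *)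

theory Defs
  imports Main
begin

text \<open>The projective plane PG(2,q) over a finite field 'a with q = CARD('a).\<close>

type_synonym 'a vec3 = "'a \<times> 'a \<times> 'a"
type_synonym 'a pg_pt = "'a vec3 set"

definition pt_of :: "'a::field vec3 \<Rightarrow> 'a pg_pt" where
  "pt_of v = (case v of (x, y, z) \<Rightarrow> {(c * x, c * y, c * z) | c. c \<noteq> 0})"

definition pg_points :: "'a::field pg_pt set" where
  "pg_points = {pt_of v | v. v \<noteq> (0, 0, 0)}"

definition line_of :: "'a::field vec3 \<Rightarrow> 'a pg_pt set" where
  "line_of u = {p \<in> pg_points. \<forall>(x, y, z) \<in> p.
      (case u of (a, b, c) \<Rightarrow> a * x + b * y + c * z = 0)}"

definition pg_lines :: "'a::field pg_pt set set" where
  "pg_lines = {line_of u | u. u \<noteq> (0, 0, 0)}"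

text \<open>A spans PG(2,q) iff A is not contained in a line (the span of A is a
  proper subspace iff it lies in a hyperplane).\<close>
definition spans_plane :: "'a::field pg_pt set \<Rightarrow> bool" where
  "spans_plane A \<longleftrightarrow> \<not> (\<exists>L \<in> pg_lines. A \<subseteq> L)"

definition secant_mult :: "'a::{field,finite} pg_pt set \<Rightarrow> 'a pg_pt \<Rightarrow> nat" where
  "secant_mult A x = (\<Sum>L \<in> {L \<in> pg_lines. x \<in> L}. card (L \<inter> A) choose 2)"

definition saturating :: "nat \<Rightarrow> 'a::{field,finite} pg_pt set \<Rightarrow> bool" where
  "saturating \<mu> A \<longleftrightarrow> A \<subseteq> pg_points \<and> spans_plane A \<and> A \<noteq> pg_points \<and>
     (\<forall>x \<in> pg_points - A. secant_mult A x \<ge> \<mu>)"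

definition minimal_saturating :: "nat \<Rightarrow> nat \<Rightarrow> 'a::{field,finite} pg_pt set \<Rightarrow> bool" where
  "minimal_saturating \<mu> n A \<longleftrightarrow> saturating \<mu> A \<and> card A = n \<and>
     \<not> (\<exists>B \<subseteq> A. card B = n - 1 \<and> saturating \<mu> B)"

end

theory Submission
  imports Defs
begin

definition dot :: "'a::field vec3 \<Rightarrow> 'a vec3 \<Rightarrow> 'a" where
  "dot u v = (case u of (a,b,c) \<Rightarrow> case v of (x,y,z) \<Rightarrow> a*x+b*y+c*z)"
definition cross :: "'a::field vec3 \<Rightarrow> 'a vec3 \<Rightarrow> 'a vec3" where
  "cross u v = (case u of (a,b,c) \<Rightarrow> case v of (x,y,z) \<Rightarrow> (b*z - c*y, c*x - a*z, a*y - b*x))"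
definition smul :: "'a::field \<Rightarrow> 'a vec3 \<Rightarrow> 'a vec3" where
  "smul k v = (case v of (x,y,z) \<Rightarrow> (k*x,k*y,k*z))"

lemma pt_of_alt: "pt_of v = {smul c v | c. c \<noteq> 0}"
  by (cases v) (simp add: pt_of_def smul_def)

lemma line_of_alt: "line_of u = {p \<in> pg_points. \<forall>w\<in>p. dot u w = 0}"
  unfolding line_of_def dot_def by (auto split: prod.splits)

lemma dot_smul: "dot u (smul k v) = k * dot u v"
  by (cases u; cases v) (simp add: dot_def smul_def algebra_simps)

lemma smul_smul: "smul a (smul b v) = smul (a*b) v"
  by (cases v) (simp add: smul_def)

lemma smul_one: "smul 1 v = v"
  by (cases v) (simp add: smul_def)

lemma smul_zero_iff: "smul k v = (0,0,0) \<longleftrightarrow> k = 0 \<or> v = (0,0,0)"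
  by (cases v) (auto simp: smul_def)

lemma parallel:
  assumes "cross u w = (0,0,0)" "w \<noteq> (0,0,0)"
  shows "\<exists>k. u = smul k w"
proof -
  obtain a b c where u: "u = (a,b,c)" by (cases u)
  obtain x y z where w: "w = (x,y,z)" by (cases w)
  have h: "b*z = c*y" "c*x = a*z" "a*y = b*x" using assms(1) by (auto simp: u w cross_def)
  show ?thesis
  proof (cases "x = 0")
    case False
    have "u = smul (a/x) w" using False h by (simp add: u w smul_def field_simps)
    then show ?thesis by blast
  next
    case x: True
    show ?thesis
    proof (cases "y = 0")
      case False
      have "u = smul (b/y) w" using False h x by (simp add: u w smul_def field_simps)
      then show ?thesis by blast
    next
      case y: True
      then have "z \<noteq> 0" using x assms(2) w by auto
      then have "u = smul (c/z) w" using h x y by (simp add: u w smul_def field_simps)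
      then show ?thesis by blast
    qed
  qed
qed

lemma mem_pt: "w \<in> pt_of v \<longleftrightarrow> (\<exists>c. c \<noteq> 0 \<and> w = smul c v)"
  by (auto simp: pt_of_alt)

lemma self_in_pt: "v \<in> pt_of v"
  using smul_one[of v] by (auto simp: mem_pt intro!: exI[of _ 1])

lemma pt_eq_if_mem:
  assumes "w \<in> pt_of v"
  shows "pt_of w = pt_of v"
proof -
  obtain c where c: "c \<noteq> 0" "w = smul c v" using assms by (auto simp: mem_pt)
  show ?thesis
  proof (rule set_eqI)
    fix t
    show "t \<in> pt_of w \<longleftrightarrow> t \<in> pt_of v"
    proof
      assume "t \<in> pt_of w"
      then obtain d where "d \<noteq> 0" "t = smul d w" by (auto simp: mem_pt)
      then show "t \<in> pt_of v" using c unfolding mem_pt by (metis smul_smul mult_eq_0_iff)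
    next
      assume "t \<in> pt_of v"
      then obtain d where d: "d \<noteq> 0" "t = smul d v" by (auto simp: mem_pt)
      have "t = smul (d / c) w" using c d by (simp add: smul_smul)
      then show "t \<in> pt_of w" using c d unfolding mem_pt by (metis divide_eq_0_iff)
    qed
  qed
qed

lemma pts_nonzero: "v \<noteq> (0,0,0) \<Longrightarrow> w \<in> pt_of v \<Longrightarrow> w \<noteq> (0,0,0)"
  by (auto simp: mem_pt smul_zero_iff)

lemma pgpt_intro: "v \<noteq> (0,0,0) \<Longrightarrow> pt_of v \<in> pg_points"
  unfolding pg_points_def by blast

lemma pt_in_line: "v \<noteq> (0,0,0) \<Longrightarrow> pt_of v \<in> line_of u \<longleftrightarrow> dot u v = 0"
proof -
  assume v: "v \<noteq> (0,0,0)"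
  have "(\<forall>w\<in>pt_of v. dot u w = 0) \<longleftrightarrow> dot u v = 0"
  proof
    assume "\<forall>w\<in>pt_of v. dot u w = 0" then show "dot u v = 0" using self_in_pt[of v] by blast
  next
    assume h: "dot u v = 0"
    show "\<forall>w\<in>pt_of v. dot u w = 0"
    proof
      fix w assume "w \<in> pt_of v"
      then obtain c where "w = smul c v" unfolding mem_pt by blast
      then show "dot u w = 0" using h by (simp add: dot_smul)
    qed
  qed
  then show ?thesis unfolding line_of_alt using pgpt_intro[OF v] by blast
qed

lemma pgpts: "p \<in> pg_points \<Longrightarrow> \<exists>v. v \<noteq> (0,0,0) \<and> p = pt_of v"
  by (auto simp: pg_points_def)


lemma pglns: "L \<in> pg_lines \<Longrightarrow> \<exists>u. u \<noteq> (0,0,0) \<and> L = line_of u"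
  by (auto simp: pg_lines_def)

lemma line_sub: "L \<in> pg_lines \<Longrightarrow> L \<subseteq> pg_points"
  by (auto simp: pg_lines_def line_of_alt)

lemma pt_eq_cross:
  assumes "v \<noteq> (0,0,0)" "w \<noteq> (0,0,0)"
  shows "pt_of v = pt_of w \<longleftrightarrow> cross w v = (0,0,0)"
proof
  assume "pt_of v = pt_of w"
  then have "w \<in> pt_of v" using self_in_pt[of w] by simp
  then obtain c where "w = smul c v" by (auto simp: mem_pt)
  then show "cross w v = (0,0,0)" by (cases v) (simp add: smul_def cross_def algebra_simps)
next
  assume "cross w v = (0,0,0)"
  then obtain k where k: "w = smul k v" using parallel assms by blast
  then have "k \<noteq> 0" using assms by (auto simp: smul_zero_iff)
  then have "w \<in> pt_of v" using k by (auto simp: mem_pt)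
  then show "pt_of v = pt_of w" using pt_eq_if_mem by metis
qed

lemma cross_cross:
  assumes "dot u v = 0" "dot u v' = 0"
  shows "cross u (cross v v') = (0,0,0)"
proof -
  obtain a b c where u: "u = (a,b,c)" by (cases u)
  obtain x y z where v: "v = (x,y,z)" by (cases v)
  obtain x' y' z' where v': "v' = (x',y',z')" by (cases v')
  have h1: "a*x+b*y+c*z = 0" "a*x'+b*y'+c*z' = 0" using assms by (auto simp: u v v' dot_def)
  have e1: "b * (x * y' - y * x') - c * (z * x' - x * z') = x*(a*x'+b*y'+c*z') - x'*(a*x+b*y+c*z)"
    by (simp add: algebra_simps)
  have e2: "c * (y * z' - z * y') - a * (x * y' - y * x') = y*(a*x'+b*y'+c*z') - y'*(a*x+b*y+c*z)"
    by (simp add: algebra_simps)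
  have e3: "a * (z * x' - x * z') - b * (y * z' - z * y') = z*(a*x'+b*y'+c*z') - z'*(a*x+b*y+c*z)"
    by (simp add: algebra_simps)
  show ?thesis using e1 e2 e3 h1 by (simp add: u v v' cross_def)
qed

lemma line_eq:
  assumes "u \<noteq> (0,0,0)" "u' \<noteq> (0,0,0)" "cross u u' = (0,0,0)"
  shows "line_of u = line_of u'"
proof -
  obtain k where k: "u = smul k u'" using parallel assms by blast
  then have "k \<noteq> 0" using assms by (auto simp: smul_zero_iff)
  have "dot u w = k * dot u' w" for w
    using k by (cases w; cases u') (simp add: dot_def smul_def algebra_simps)
  then show ?thesis using \<open>k \<noteq> 0\<close> unfolding line_of_alt by auto
qed

lemma dot_cross1: "dot u (cross u v) = 0" and dot_cross2: "dot v (cross u v) = 0"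
  by (cases u; cases v; simp add: dot_def cross_def algebra_simps)+

lemma cross_smul: "cross (smul k w) (smul k' w) = (0,0,0)"
  by (cases w) (simp add: smul_def cross_def algebra_simps)

lemma unique_line:
  assumes "L \<in> pg_lines" "L' \<in> pg_lines" "p \<in> L" "p' \<in> L" "p \<in> L'" "p' \<in> L'" "p \<noteq> p'"
  shows "L = L'"
proof -
  obtain u where u: "u \<noteq> (0,0,0)" "L = line_of u" using pglns assms(1) by blast
  obtain u' where u': "u' \<noteq> (0,0,0)" "L' = line_of u'" using pglns assms(2) by blast
  obtain v where v: "v \<noteq> (0,0,0)" "p = pt_of v" using pgpts line_sub assms by blast
  obtain v' where v': "v' \<noteq> (0,0,0)" "p' = pt_of v'" using pgpts line_sub assms by blast
  have w: "cross v v' \<noteq> (0,0,0)"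
  proof
    assume "cross v v' = (0,0,0)"
    then have "pt_of v' = pt_of v" using pt_eq_cross v v' by blast
    then show False using assms(7) v v' by simp
  qed
  have "dot u v = 0" "dot u v' = 0" "dot u' v = 0" "dot u' v' = 0"
    using assms u u' v v' pt_in_line by blast+
  then have "cross u (cross v v') = (0,0,0)" "cross u' (cross v v') = (0,0,0)"
    using cross_cross by blast+
  then obtain k k' where "u = smul k (cross v v')" "u' = smul k' (cross v v')"
    using parallel w by metis
  then have "cross u u' = (0,0,0)" using cross_smul by simp
  then show ?thesis using line_eq[OF u(1) u'(1)] u(2) u'(2) by simp
qed

lemma join:
  assumes "p \<in> pg_points" "p' \<in> pg_points" "p \<noteq> p'"
  shows "\<exists>L \<in> pg_lines. p \<in> L \<and> p' \<in> L"
proof -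
  obtain v where v: "v \<noteq> (0,0,0)" "p = pt_of v" using pgpts assms by blast
  obtain v' where v': "v' \<noteq> (0,0,0)" "p' = pt_of v'" using pgpts assms by blast
  have w: "cross v v' \<noteq> (0,0,0)"
  proof
    assume "cross v v' = (0,0,0)"
    then have "pt_of v' = pt_of v" using pt_eq_cross v v' by blast
    then show False using assms(3) v v' by simp
  qed
  have "dot (cross v v') v = 0" "dot (cross v v') v' = 0"
    by (cases v; cases v'; simp add: dot_def cross_def algebra_simps)+
  then have "p \<in> line_of (cross v v')" "p' \<in> line_of (cross v v')"
    using pt_in_line v v' by blast+
  moreover have "line_of (cross v v') \<in> pg_lines" using w unfolding pg_lines_def by blast
  ultimately show ?thesis by blast
qed

lemma meet:
  assumes "L \<in> pg_lines" "L' \<in> pg_lines" "L \<noteq> L'"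
  shows "\<exists>p. p \<in> L \<and> p \<in> L'"
proof -
  obtain u where u: "u \<noteq> (0,0,0)" "L = line_of u" using pglns assms(1) by blast
  obtain u' where u': "u' \<noteq> (0,0,0)" "L' = line_of u'" using pglns assms(2) by blast
  have w: "cross u u' \<noteq> (0,0,0)" using line_eq[OF u(1) u'(1)] u(2) u'(2) assms(3) by blast
  show ?thesis using pt_in_line[OF w] dot_cross1 dot_cross2 u u' by blast
qed

lemma card_field_ge2: "card (UNIV :: 'a::{field,finite} set) \<ge> 2"
proof -
  have "card {0::'a, 1} \<le> card (UNIV::'a set)" by (rule card_mono) auto
  then show ?thesis by simp
qed

lemma solve3: fixes a b c x y z :: "'a::field" assumes "a \<noteq> 0" "a*x+b*y+c*z = 0" shows "x = -(b*y+c*z)/a"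
proof -
  have "a*x = -(b*y+c*z)" by (rule iffD2[OF eq_neg_iff_add_eq_0]) (use assms(2) in \<open>simp add: add.assoc\<close>)
  then show ?thesis using assms(1) by (simp add: eq_divide_eq mult.commute)
qed

lemma card_pt:
  assumes "v \<noteq> (0,0,0)"
  shows "card (pt_of v :: 'a::{field,finite} pg_pt) = card (UNIV::'a set) - 1"
proof -
  have e: "pt_of v = (\<lambda>c. smul c v) ` (UNIV - {0})" by (auto simp: pt_of_alt)
  have "inj_on (\<lambda>c. smul c v) (UNIV - {0})"
  proof
    fix c d assume "smul c v = smul d v"
    then show "c = d" using assms by (cases v) (auto simp: smul_def)
  qed
  then have "card (pt_of v) = card (UNIV - {0::'a})" unfolding e by (rule card_image)
  also have "\<dots> = card (UNIV::'a set) - 1" by (simp add: card_Diff_singleton)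
  finally show ?thesis .
qed

lemma card_ker:
  assumes "u \<noteq> (0,0,0)"
  shows "card {w. dot u w = (0::'a::{field,finite})} = card (UNIV::'a set) * card (UNIV::'a set)"
proof -
  obtain a b c where u: "u = (a,b,c)" by (cases u)
  have "a \<noteq> 0 \<or> b \<noteq> 0 \<or> c \<noteq> 0" using assms u by auto
  then obtain f :: "'a \<times> 'a \<Rightarrow> 'a vec3" where f: "inj f" "range f = {w. dot u w = 0}"
  proof (elim disjE)
    assume a: "a \<noteq> 0"
    let ?f = "\<lambda>(y,z). (-(b*y+c*z)/a, y, z)"
    have "inj ?f" by (auto simp: inj_on_def)
    moreover have "range ?f = {w. dot u w = 0}"
    proof (rule set_eqI, rule iffI)
      fix w assume "w \<in> range ?f" then show "w \<in> {w. dot u w = 0}"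
        using a by (auto simp: u dot_def)
    next
      fix w assume "w \<in> {w. dot u w = 0}"
      then obtain x y z where w: "w = (x,y,z)" "a*x+b*y+c*z = 0" by (cases w) (auto simp: u dot_def)
      then have "x = -(b*y+c*z)/a" using a solve3 by blast
      then have "w = ?f (y,z)" using w by simp
      then show "w \<in> range ?f" by blast
    qed
    ultimately show ?thesis using that by blast
  next
    assume a: "b \<noteq> 0"
    let ?f = "\<lambda>(x,z). (x, -(a*x+c*z)/b, z)"
    have "inj ?f" by (auto simp: inj_on_def)
    moreover have "range ?f = {w. dot u w = 0}"
    proof (rule set_eqI, rule iffI)
      fix w assume "w \<in> range ?f" then show "w \<in> {w. dot u w = 0}"
        using a by (auto simp: u dot_def)
    next
      fix w assume "w \<in> {w. dot u w = 0}"
      then obtain x y z where w: "w = (x,y,z)" "a*x+b*y+c*z = 0" by (cases w) (auto simp: u dot_def)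
      moreover have "b*y+a*x+c*z = 0" using w(2) by (simp add: ac_simps)
      ultimately have "y = -(a*x+c*z)/b" using a solve3 by blast
      then have "w = ?f (x,z)" using w by simp
      then show "w \<in> range ?f" by blast
    qed
    ultimately show ?thesis using that by blast
  next
    assume a: "c \<noteq> 0"
    let ?f = "\<lambda>(x,y). (x, y, -(a*x+b*y)/c)"
    have "inj ?f" by (auto simp: inj_on_def)
    moreover have "range ?f = {w. dot u w = 0}"
    proof (rule set_eqI, rule iffI)
      fix w assume "w \<in> range ?f" then show "w \<in> {w. dot u w = 0}"
        using a by (auto simp: u dot_def)
    next
      fix w assume "w \<in> {w. dot u w = 0}"
      then obtain x y z where w: "w = (x,y,z)" "a*x+b*y+c*z = 0" by (cases w) (auto simp: u dot_def)
      moreover have "c*z+a*x+b*y = 0" using w(2) by (simp add: ac_simps)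
      ultimately have "z = -(a*x+b*y)/c" using a solve3 by blast
      then have "w = ?f (x,y)" using w by simp
      then show "w \<in> range ?f" by blast
    qed
    ultimately show ?thesis using that by blast
  qed
  then have "card {w. dot u w = 0} = card (UNIV :: ('a \<times> 'a) set)"
    using card_image by metis
  then show ?thesis by (metis card_cartesian_product UNIV_Times_UNIV)
qed

lemma card_line:
  assumes "L \<in> pg_lines"
  shows "card (L :: 'a::{field,finite} pg_pt set) = card (UNIV::'a set) + 1"
proof -
  obtain u where u: "u \<noteq> (0,0,0)" "L = line_of u" using pglns assms by blast
  have U: "\<Union>L = {w. dot u w = 0} - {(0,0,0)}"
  proof (rule set_eqI, rule iffI)
    fix w assume "w \<in> \<Union>L"
    then obtain p where p: "p \<in> L" "w \<in> p" by blast
    then have "dot u w = 0" using u unfolding line_of_alt by blast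
    moreover obtain v where "v \<noteq> (0,0,0)" "p = pt_of v" using p line_sub assms pgpts by blast
    ultimately show "w \<in> {w. dot u w = 0} - {(0,0,0)}" using p pts_nonzero by blast
  next
    fix w assume w: "w \<in> {w. dot u w = 0} - {(0,0,0)}"
    then have "pt_of w \<in> L" using pt_in_line u by blast
    then show "w \<in> \<Union>L" using self_in_pt by blast
  qed
  have D: "pairwise disjnt L"
  proof (rule pairwiseI)
    fix p p' assume pp: "p \<in> L" "p' \<in> L" "p \<noteq> p'"
    show "disjnt p p'"
    proof (rule ccontr)
      assume "\<not> disjnt p p'"
      then obtain w where w: "w \<in> p" "w \<in> p'" unfolding disjnt_def by blast
      obtain v where v: "v \<noteq> (0,0,0)" "p = pt_of v" using pp line_sub assms pgpts by blast
      obtain v' where v': "v' \<noteq> (0,0,0)" "p' = pt_of v'" using pp line_sub assms pgpts by blast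
      have "pt_of w = p" "pt_of w = p'" using pt_eq_if_mem w v v' by blast+
      then show False using pp by simp
    qed
  qed
  have "card (\<Union>L) = sum card L" using card_Union_disjoint[OF D] by simp
  also have "\<dots> = sum (\<lambda>_. card (UNIV::'a set) - 1) L"
  proof (rule sum.cong)
    fix p assume "p \<in> L"
    then obtain v where "v \<noteq> (0,0,0)" "p = pt_of v" using line_sub assms pgpts by blast
    then show "card p = card (UNIV::'a set) - 1" using card_pt by blast
  qed simp
  finally have e1: "card (\<Union>L) = card L * (card (UNIV::'a set) - 1)" by simp
  have "card (\<Union>L) = card (UNIV::'a set) * card (UNIV::'a set) - 1"
  proof -
    have "(0,0,0) \<in> {w. dot u w = 0}" by (cases u) (simp add: dot_def)
    then show ?thesis unfolding U using card_ker[OF u(1)] by (simp add: card_Diff_singleton)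
  qed
  moreover have "q*q - 1 = (q+1)*(q-1)" for q :: nat by (cases q) (simp_all add: algebra_simps)
  ultimately have "card L * (card (UNIV::'a set) - 1) = (card (UNIV::'a set) + 1) * (card (UNIV::'a set) - 1)"
    using e1 by simp
  moreover have "card (UNIV::'a set) - 1 \<noteq> 0" using card_field_ge2[where 'a='a] by simp
  ultimately show ?thesis by (metis mult_right_cancel)
qed

lemma inter_uniq:
  assumes "L \<in> pg_lines" "L' \<in> pg_lines" "L \<noteq> L'" "a \<in> L" "a \<in> L'" "b \<in> L" "b \<in> L'"
  shows "a = b"
  using unique_line assms by blast

lemma choose2_ge3: "n \<ge> 3 \<Longrightarrow> n choose 2 \<ge> (2::nat)"
proof -
  assume "n \<ge> 3"
  then have "n * (n - 1) \<ge> 3 * 2" by (intro mult_mono) auto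
  then show ?thesis by (simp add: choose_two)
qed

lemma sec_ge_one:
  fixes A :: "'a::{field,finite} pg_pt set"
  assumes "L \<in> pg_lines" "x \<in> L" "card (L \<inter> A) \<ge> 3"
  shows "secant_mult A x \<ge> 2"
proof -
  have "card (L \<inter> A) choose 2 \<le> secant_mult A x"
    unfolding secant_mult_def
    by (rule member_le_sum) (use assms in auto)
  then show ?thesis using choose2_ge3[OF assms(3)] by linarith
qed

lemma sec_ge_two:
  fixes A :: "'a::{field,finite} pg_pt set"
  assumes "L1 \<in> pg_lines" "x \<in> L1" "card (L1 \<inter> A) \<ge> 2"
    "L2 \<in> pg_lines" "x \<in> L2" "card (L2 \<inter> A) \<ge> 2" "L1 \<noteq> L2"
  shows "secant_mult A x \<ge> 2"
proof -
  have "(\<Sum>L\<in>{L1,L2}. card (L \<inter> A) choose 2) \<le> secant_mult A x"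
    unfolding secant_mult_def
    by (rule sum_mono2) (use assms in auto)
  moreover have "card (L1 \<inter> A) choose 2 > 0" "card (L2 \<inter> A) choose 2 > 0"
    using assms zero_less_binomial by auto
  moreover have "(\<Sum>L\<in>{L1,L2}. card (L \<inter> A) choose 2) = (card (L1 \<inter> A) choose 2) + (card (L2 \<inter> A) choose 2)"
    using assms(7) by simp
  ultimately show ?thesis by linarith
qed

lemma sec_eq_one:
  fixes B :: "'a::{field,finite} pg_pt set"
  assumes "L0 \<in> pg_lines" "x \<in> L0" "card (L0 \<inter> B) = 2"
    "\<And>L. L \<in> pg_lines \<Longrightarrow> x \<in> L \<Longrightarrow> L \<noteq> L0 \<Longrightarrow> \<forall>a\<in>L \<inter> B. \<forall>b\<in>L \<inter> B. a = b"
  shows "secant_mult B x = 1"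
proof -
  let ?S = "{L \<in> pg_lines. x \<in> L}"
  have "secant_mult B x = (card (L0 \<inter> B) choose 2) + (\<Sum>L\<in>?S - {L0}. card (L \<inter> B) choose 2)"
    unfolding secant_mult_def by (rule sum.remove) (use assms in auto)
  also have "(\<Sum>L\<in>?S - {L0}. card (L \<inter> B) choose 2) = 0"
  proof (rule sum.neutral, rule ballI)
    fix L assume "L \<in> ?S - {L0}"
    then have "card (L \<inter> B) \<le> Suc 0" using assms(4) card_le_Suc0_iff_eq[of "L \<inter> B"] by auto
    then show "card (L \<inter> B) choose 2 = 0" by simp
  qed
  finally show ?thesis using assms(3) by simp
qed

lemma two_in:
  fixes A :: "'a::{field,finite} pg_pt set"
  assumes "a \<in> A" "b \<in> A" "a \<noteq> b"
  shows "card A \<ge> 2"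
proof -
  have "card {a,b} \<le> card A" by (rule card_mono) (use assms in auto)
  then show ?thesis using assms by simp
qed

theorem theorem6p6:
  fixes l m :: "'a::{field,finite} pg_pt set" and P Q R S T :: "'a pg_pt"
  assumes "card (UNIV :: 'a set) \<ge> 4"
    and "l \<in> pg_lines" and "m \<in> pg_lines" and "l \<noteq> m"
    and "P \<in> l" and "P \<in> m"
    and "Q \<in> l" and "Q \<noteq> P"
    and "R \<in> m" and "S \<in> m" and "T \<in> m"
    and "R \<noteq> S" and "R \<noteq> T" and "S \<noteq> T"
    and "R \<noteq> P" and "S \<noteq> P" and "T \<noteq> P"
  shows "minimal_saturating 2 (card (UNIV :: 'a set) + 2) ((l - {P, Q}) \<union> {R, S, T})"
proof -
  note lines = assms(2,3)
  let ?q = "card (UNIV :: 'a set)"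
  define A where "A = (l - {P, Q}) \<union> {R, S, T}"
  have lm: "\<And>z. z \<in> l \<Longrightarrow> z \<in> m \<Longrightarrow> z = P"
    using inter_uniq[OF lines assms(4)] assms(5,6) by blast
  have RSTl: "R \<notin> l" "S \<notin> l" "T \<notin> l" "Q \<notin> m" using lm assms by blast+
  have lpts: "l \<subseteq> pg_points" "m \<subseteq> pg_points" using line_sub lines by auto
  have cl: "card l = ?q + 1" using card_line lines by blast
  have cl2: "card (l - {P,Q}) = ?q - 1"
    using cl assms(5,7,8) by (simp add: card_Diff_subset)
  have c3: "card {R,S,T} = 3" using assms(12-14) by simp
  have cA: "card A = ?q + 2"
  proof -
    have "card A = card (l - {P,Q}) + card {R,S,T}"
      unfolding A_def by (rule card_Un_disjoint) (use RSTl in auto)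
    then show ?thesis using cl2 c3 assms(1) by simp
  qed
  have Apts: "A \<subseteq> pg_points" unfolding A_def using lpts assms(9-11) by blast
  have Amem: "\<And>w. w \<in> A \<longleftrightarrow> (w \<in> l \<and> w \<noteq> P \<and> w \<noteq> Q) \<or> w = R \<or> w = S \<or> w = T"
    unfolding A_def by auto
  have PnA: "P \<notin> A" using Amem RSTl assms(5) by blast
  have spans: "spans_plane A"
    unfolding spans_plane_def
  proof
    assume "\<exists>L\<in>pg_lines. A \<subseteq> L"
    then obtain L where L: "L \<in> pg_lines" "A \<subseteq> L" by blast
    have "\<not> card (l - {P,Q}) \<le> Suc 0" using cl2 assms(1) by simp
    then obtain a b where ab: "a \<in> l - {P,Q}" "b \<in> l - {P,Q}" "a \<noteq> b"
      using card_le_Suc0_iff_eq[OF finite, of "l - {P,Q}"] by blast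
    have "a \<in> A" "b \<in> A" using ab unfolding A_def by blast+
    then have "a \<in> L" "b \<in> L" using L(2) by blast+
    moreover have "a \<in> l" "b \<in> l" using ab by blast+
    ultimately have "L = l" using unique_line[OF L(1) lines(1), of a b] ab(3) by blast
    moreover have "R \<in> L" using L(2) unfolding A_def by blast
    ultimately show False using RSTl(1) by blast
  qed
  have sat: "\<forall>x \<in> pg_points - A. secant_mult A x \<ge> 2"
  proof
    fix x assume x: "x \<in> pg_points - A"
    show "secant_mult A x \<ge> 2"
    proof (cases "x \<in> m")
      case True
      have "card {R,S,T} \<le> card (m \<inter> A)" by (rule card_mono) (use assms in \<open>auto simp: A_def\<close>)
      then show ?thesis using sec_ge_one[OF lines(2) True] c3 by simp
    next
      case xm: False
      show ?thesis
      proof (cases "x \<in> l")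
        case True
        have "l \<inter> A = l - {P,Q}" unfolding A_def using RSTl by auto
        then show ?thesis using sec_ge_one[OF lines(1) True] cl2 assms(1) by simp
      next
        case xl: False
        have good: "\<exists>LK \<in> pg_lines. x \<in> LK \<and> K \<in> LK \<and> (Q \<notin> LK \<longrightarrow> card (LK \<inter> A) \<ge> 2)"
          if K: "K \<in> {R,S,T}" for K
        proof -
          have Km: "K \<in> m" "K \<notin> l" "K \<noteq> P" "K \<in> A" using K assms RSTl unfolding A_def by auto
          have "x \<noteq> K" using xm Km by auto
          then obtain LK where LK: "LK \<in> pg_lines" "x \<in> LK" "K \<in> LK"
            using join[of x K] x Km lpts by blast
          have LKl: "LK \<noteq> l" using LK Km by auto
          obtain Z where Z: "Z \<in> LK" "Z \<in> l" using meet[OF LK(1) lines(1) LKl] by blast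
          have "Z \<noteq> P"
          proof
            assume "Z = P"
            then have "LK = m" using unique_line[OF LK(1) lines(2), of Z K] Z LK Km assms(6) by auto
            then show False using LK xm by simp
          qed
          moreover have "Z \<noteq> K" using Z Km by auto
          ultimately have "Q \<notin> LK \<longrightarrow> card (LK \<inter> A) \<ge> 2"
            using two_in[of Z "LK \<inter> A" K] Z LK Km Amem by auto
          then show ?thesis using LK by blast
        qed
        obtain LR where LR: "LR \<in> pg_lines" "x \<in> LR" "R \<in> LR" "Q \<notin> LR \<longrightarrow> card (LR \<inter> A) \<ge> 2"
          using good[of R] by blast
        obtain LS where LS: "LS \<in> pg_lines" "x \<in> LS" "S \<in> LS" "Q \<notin> LS \<longrightarrow> card (LS \<inter> A) \<ge> 2"
          using good[of S] by blast
        obtain LT where LT: "LT \<in> pg_lines" "x \<in> LT" "T \<in> LT" "Q \<notin> LT \<longrightarrow> card (LT \<inter> A) \<ge> 2"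
          using good[of T] by blast
        have dist: "L1 \<noteq> L2" if "L1 \<in> pg_lines" "x \<in> L1" "K1 \<in> L1" "L2 \<in> pg_lines" "K2 \<in> L2"
          "K1 \<in> m" "K2 \<in> m" "K1 \<noteq> K2" for L1 L2 K1 K2
        proof
          assume "L1 = L2"
          then have "L1 = m" using unique_line[OF that(1) lines(2), of K1 K2] that by auto
          then show False using that xm by simp
        qed
        have xQ: "x \<noteq> Q" using xl assms by auto
        have oneQ: "L1 = L2" if "L1 \<in> pg_lines" "x \<in> L1" "Q \<in> L1" "L2 \<in> pg_lines" "x \<in> L2" "Q \<in> L2"
          for L1 L2
          using unique_line[OF that(1,4), of x Q] that xQ by auto
        have dRS: "LR \<noteq> LS" using dist[OF LR(1,2,3) LS(1,3)] assms by auto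
        have dRT: "LR \<noteq> LT" using dist[OF LR(1,2,3) LT(1,3)] assms by auto
        have dST: "LS \<noteq> LT" using dist[OF LS(1,2,3) LT(1,3)] assms by auto
        show ?thesis
        proof (cases "Q \<in> LR")
          case True
          then have "Q \<notin> LS" "Q \<notin> LT" using oneQ LR LS LT dRS dRT by metis+
          then show ?thesis using sec_ge_two[OF LS(1,2) _ LT(1,2) _ dST] LS LT by blast
        next
          case QR: False
          show ?thesis
          proof (cases "Q \<in> LS")
            case True
            then have "Q \<notin> LT" using oneQ LS LT dST by metis
            then show ?thesis using sec_ge_two[OF LR(1,2) _ LT(1,2) _ dRT] LR LT QR by blast
          next
            case False
            then show ?thesis using sec_ge_two[OF LR(1,2) _ LS(1,2) _ dRS] LR LS QR by blast
          qed
        qed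
      qed
    qed
  qed
  have satA: "saturating 2 A"
    unfolding saturating_def using Apts spans sat PnA lpts assms(5) by blast
  have notsat: "\<not> saturating 2 (A - {a})" if a: "a \<in> A" for a
  proof -
    let ?B = "A - {a}"
    have key: "\<exists>y \<in> pg_points - ?B. secant_mult ?B y = 1"
    proof (cases "a \<in> {R,S,T}")
      case True
      have am: "a \<in> m" "a \<notin> l" using True assms RSTl by auto
      have mB: "m \<inter> ?B = {R,S,T} - {a}"
        unfolding A_def using lm assms(9-11) by auto
      have cmB: "card (m \<inter> ?B) = 2" unfolding mB using c3 True by (simp add: card_Diff_singleton)
      have "secant_mult ?B a = 1"
      proof (rule sec_eq_one[OF lines(2) am(1) cmB])
        fix L assume L: "L \<in> pg_lines" "a \<in> L" "L \<noteq> m"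
        have Ll: "L \<noteq> l" using L am by auto
        show "\<forall>u\<in>L \<inter> ?B. \<forall>v\<in>L \<inter> ?B. u = v"
        proof (intro ballI)
          fix u v assume uv: "u \<in> L \<inter> ?B" "v \<in> L \<inter> ?B"
          have inl: "w \<in> l" if "w \<in> L \<inter> ?B" for w
          proof (rule ccontr)
            assume "w \<notin> l"
            then have "w \<in> m" "w \<noteq> a" using that Amem assms by auto
            then have "L = m" using unique_line[OF L(1) lines(2), of a w] L am that by auto
            then show False using L by simp
          qed
          show "u = v" using inter_uniq[OF L(1) lines(1) Ll] uv inl by blast
        qed
      qed
      moreover have "a \<in> pg_points - ?B" using am lpts by auto
      ultimately show ?thesis by blast
    next
      case False
      then have X: "a \<in> l" "a \<noteq> P" "a \<noteq> Q" using a Amem by auto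
      have Xm: "a \<notin> m" using lm X by auto
      obtain L1 where L1: "L1 \<in> pg_lines" "a \<in> L1" "R \<in> L1"
        using join[of a R] X RSTl(1) lpts assms(9) by blast
      obtain L2 where L2: "L2 \<in> pg_lines" "Q \<in> L2" "S \<in> L2"
        using join[of Q S] RSTl(2) lpts assms(7,10) by blast
      have L1l: "L1 \<noteq> l" using L1 RSTl by auto
      have L2l: "L2 \<noteq> l" using L2 RSTl by auto
      have L1m: "L1 \<noteq> m" using L1 Xm by auto
      have L2m: "L2 \<noteq> m" using L2 RSTl by auto
      have L12: "L1 \<noteq> L2"
      proof
        assume "L1 = L2"
        then have "a = Q" using inter_uniq[OF L1(1) lines(1) L1l] L1 L2 X assms(7) by blast
        then show False using X by simp
      qed
      obtain Y where Y: "Y \<in> L1" "Y \<in> L2" using meet[OF L1(1) L2(1) L12] by blast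
      have Yl: "Y \<notin> l"
      proof
        assume "Y \<in> l"
        then have "Y = a" "Y = Q"
          using inter_uniq[OF L1(1) lines(1) L1l] inter_uniq[OF L2(1) lines(1) L2l] Y L1 L2 X assms(7)
          by blast+
        then show False using X by simp
      qed
      have Ym: "Y \<notin> m"
      proof
        assume "Y \<in> m"
        then have "Y = R" "Y = S"
          using inter_uniq[OF L1(1) lines(2) L1m] inter_uniq[OF L2(1) lines(2) L2m] Y L1 L2 assms(9,10)
          by blast+
        then show False using assms(12) by simp
      qed
      have Ypt: "Y \<in> pg_points" using Y L1 line_sub by blast
      have Bmem: "\<And>w. w \<in> ?B \<Longrightarrow> (w \<in> l \<and> w \<noteq> P \<and> w \<noteq> Q \<and> w \<noteq> a) \<or> w = R \<or> w = S \<or> w = T"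
        using Amem by auto
      have YnB: "Y \<notin> ?B"
      proof
        assume "Y \<in> ?B"
        from Bmem[OF this] show False using Yl Ym assms(9-11) by blast
      qed
      have YT: "Y \<noteq> T" using Ym assms(11) by auto
      obtain L0 where L0: "L0 \<in> pg_lines" "Y \<in> L0" "T \<in> L0"
        using join[of Y T] Ypt lpts(2) assms(11) YT by blast
      have L0l: "L0 \<noteq> l" using L0 RSTl by auto
      have L0m: "L0 \<noteq> m" using L0 Ym by auto
      obtain Z where Z: "Z \<in> L0" "Z \<in> l" using meet[OF L0(1) lines(1) L0l] by blast
      have ZP: "Z \<noteq> P"
      proof
        assume "Z = P"
        then have "L0 = m" using unique_line[OF L0(1) lines(2), of Z T] Z L0 assms(6,11,17) by auto
        then show False using L0m by simp
      qed
      have YQ: "Y \<noteq> Q" using Yl assms(7) by auto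
      have ZQ: "Z \<noteq> Q"
      proof
        assume "Z = Q"
        then have "L0 = L2" using unique_line[OF L0(1) L2(1), of Y Q] Z L0 L2 Y YQ by auto
        then have "L2 = m" using unique_line[OF L2(1) lines(2), of S T] L0 L2 assms(10,11,14) by auto
        then show False using L2m by simp
      qed
      have YX: "Y \<noteq> a" using Yl X by auto
      have ZX: "Z \<noteq> a"
      proof
        assume "Z = a"
        then have "L0 = L1" using unique_line[OF L0(1) L1(1), of Y a] Z L0 L1 Y YX by auto
        then have "L1 = m" using unique_line[OF L1(1) lines(2), of R T] L0 L1 assms(9,11,13) by auto
        then show False using L1m by simp
      qed
      have L0B: "L0 \<inter> ?B = {Z, T}"
      proof (rule set_eqI, rule iffI)
        fix w assume w: "w \<in> L0 \<inter> ?B"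
        then have "w \<in> ?B" by blast
        from Bmem[OF this] consider "w \<in> l" | "w \<in> m" using assms(9-11) by blast
        then show "w \<in> {Z,T}"
        proof cases
          case 1 then show ?thesis using inter_uniq[OF L0(1) lines(1) L0l] w Z by blast
        next
          case 2 then show ?thesis using inter_uniq[OF L0(1) lines(2) L0m] w L0 assms(11) by blast
        qed
      next
        fix w assume "w \<in> {Z,T}"
        then show "w \<in> L0 \<inter> ?B" using Z L0 ZP ZQ ZX Amem X RSTl by auto
      qed
      have ZT: "Z \<noteq> T" using Z RSTl by auto
      have cL0: "card (L0 \<inter> ?B) = 2" unfolding L0B using ZT by simp
      have "secant_mult ?B Y = 1"
      proof (rule sec_eq_one[OF L0(1,2) cL0])
        fix L assume L: "L \<in> pg_lines" "Y \<in> L" "L \<noteq> L0"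
        have Ll: "L \<noteq> l" using L Yl by auto
        have Lm: "L \<noteq> m" using L Ym by auto
        have TL: "T \<notin> L" using unique_line[OF L(1) L0(1), of Y T] L L0 YT by auto
        have RL: "R \<in> L \<Longrightarrow> L = L1" using unique_line[OF L(1) L1(1), of Y R] L L1 Y Ym assms(9) by auto
        have SL: "S \<in> L \<Longrightarrow> L = L2" using unique_line[OF L(1) L2(1), of Y S] L L2 Y Ym assms(10) by auto
        have cases: "(w \<in> l \<and> w \<noteq> Q \<and> w \<noteq> a) \<or> w = R \<or> w = S" if "w \<in> L \<inter> ?B" for w
          using Bmem[of w] that TL by auto
        show "\<forall>u\<in>L \<inter> ?B. \<forall>v\<in>L \<inter> ?B. u = v"
        proof (intro ballI)
          fix u v assume uv: "u \<in> L \<inter> ?B" "v \<in> L \<inter> ?B"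
          have both_l: "u = v" if "u \<in> l" "v \<in> l" using inter_uniq[OF L(1) lines(1) Ll] uv that by blast
          have both_m: "u = v" if "u \<in> m" "v \<in> m" using inter_uniq[OF L(1) lines(2) Lm] uv that by blast
          have mixed: False if "w \<in> L \<inter> ?B" "w \<in> l" "w \<noteq> Q" "w \<noteq> a" "k = R \<or> k = S" "k \<in> L" for w k
          proof -
            from that(5) show False
            proof
              assume "k = R"
              then have "L = L1" using RL that by simp
              then have "w = a" using inter_uniq[OF L1(1) lines(1) L1l] that L1 X by blast
              then show False using that by simp
            next
              assume "k = S"
              then have "L = L2" using SL that by simp
              then have "w = Q" using inter_uniq[OF L2(1) lines(1) L2l] that L2 assms(7) by blast
              then show False using that by simp
            qed
          qed
          have RSm: "R \<in> m" "S \<in> m" using assms(9,10) .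
          from cases[OF uv(1)] show "u = v"
          proof (elim disjE conjE)
            assume u: "u \<in> l" "u \<noteq> Q" "u \<noteq> a"
            from cases[OF uv(2)] show "u = v"
            proof (elim disjE conjE)
              assume "v \<in> l" then show ?thesis using both_l u by blast
            next
              assume "v = R" then show ?thesis using mixed[OF uv(1) u, of v] uv by blast
            next
              assume "v = S" then show ?thesis using mixed[OF uv(1) u, of v] uv by blast
            qed
          next
            assume u: "u = R"
            from cases[OF uv(2)] show "u = v"
            proof (elim disjE conjE)
              assume v: "v \<in> l" "v \<noteq> Q" "v \<noteq> a" then show ?thesis using mixed[OF uv(2) v, of u] uv u by blast
            next
              assume "v = R" then show ?thesis using u by simp
            next
              assume "v = S" then show ?thesis using both_m u RSm by blast
            qed
          next
            assume u: "u = S"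
            from cases[OF uv(2)] show "u = v"
            proof (elim disjE conjE)
              assume v: "v \<in> l" "v \<noteq> Q" "v \<noteq> a" then show ?thesis using mixed[OF uv(2) v, of u] uv u by blast
            next
              assume "v = R" then show ?thesis using both_m u RSm by blast
            next
              assume "v = S" then show ?thesis using u by simp
            qed
          qed
        qed
      qed
      then show ?thesis using Ypt YnB by blast
    qed
    then obtain y where y: "y \<in> pg_points - ?B" "secant_mult ?B y = 1" by blast
    show ?thesis
    proof
      assume "saturating 2 ?B"
      then have "secant_mult ?B y \<ge> 2" using y(1) unfolding saturating_def by blast
      then show False using y(2) by simp
    qed
  qed
  have minimal: "\<not> (\<exists>B \<subseteq> A. card B = ?q + 2 - 1 \<and> saturating 2 B)"
  proof
    assume "\<exists>B \<subseteq> A. card B = ?q + 2 - 1 \<and> saturating 2 B"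
    then obtain B where B: "B \<subseteq> A" "card B = ?q + 2 - 1" "saturating 2 B" by blast
    have "card (A - B) = 1" using B cA by (simp add: card_Diff_subset)
    then obtain a where "A - B = {a}" using card_1_singletonE by blast
    then have "B = A - {a}" "a \<in> A" using B(1) by auto
    then show False using notsat B(3) by blast
  qed
  show ?thesis unfolding minimal_saturating_def A_def[symmetric] using satA cA minimal by blast
qed

end
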